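(* Let $D \subset \mathbb{N}$ be finite and let $G_n$ be the circulant graph on $n$ vertices with set of distances $D$. Then \[ \lim_{n \to \infty} \frac{\alpha(G_n)}{n} = \sup_{n} \frac{\alpha(G_n)}{n}. \]
   Context: $\mathbb{N} = \{1,2,\ldots\}$. $G_n$ has vertex set $\{0, \ldots, n-1\}$, and vertices $u, v$ (possibly equal) are adjacent iff there is $d \in D$ with $u - v \equiv d \pmod n$ or $v - u \equiv d \pmod n$ (loops may occur when $n \leq \max D$). $\alpha(G)$ is the maximum size of an independent set, which contains no two adjacent vertices and no vertex with a loop. *)

theory Defs
  imports "HOL-Analysis.Analysis"
begin

definition circ_adj :: "nat set \<Rightarrow> nat \<Rightarrow> nat \<Rightarrow> nat \<Rightarrow> bool" where
  "circ_adj D n u v \<longleftrightarrow>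
     (\<exists>d\<in>D. (int u - int v) mod int n = int d mod int n
           \<or> (int v - int u) mod int n = int d mod int n)"

definition circ_independent :: "nat set \<Rightarrow> nat \<Rightarrow> nat set \<Rightarrow> bool" where
  "circ_independent D n S \<longleftrightarrow>
     S \<subseteq> {0..<n} \<and> (\<forall>u\<in>S. \<forall>v\<in>S. \<not> circ_adj D n u v)"

definition circ_alpha :: "nat set \<Rightarrow> nat \<Rightarrow> nat" where
  "circ_alpha D n = Max (card ` {S. circ_independent D n S})"

end

theory Submission
  imports Defs
begin

lemma indep_finite_set: "finite {S. circ_independent D n S}"
proof -
  have "{S. circ_independent D n S} \<subseteq> Pow {0..<n}"
    unfolding circ_independent_def by auto
  then show ?thesis by (rule finite_subset) simp
qed

lemma indep_empty: "circ_independent D n {}"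
  unfolding circ_independent_def by simp

lemma alpha_ge: "circ_independent D n S \<Longrightarrow> card S \<le> circ_alpha D n"
  unfolding circ_alpha_def
  by (rule Max_ge) (use indep_finite_set in auto)

lemma alpha_ex: "\<exists>S. circ_independent D n S \<and> card S = circ_alpha D n"
proof -
  have ne: "card ` {S. circ_independent D n S} \<noteq> {}" using indep_empty by blast
  have fi: "finite (card ` {S. circ_independent D n S})" using indep_finite_set by simp
  have "circ_alpha D n \<in> card ` {S. circ_independent D n S}"
    unfolding circ_alpha_def by (rule Max_in[OF fi ne])
  then obtain S where "S \<in> {S. circ_independent D n S}" "circ_alpha D n = card S"
    by (rule imageE)
  then show ?thesis by auto
qed

lemma alpha_le: "circ_alpha D n \<le> n"
proof -
  obtain S where S: "circ_independent D n S" "card S = circ_alpha D n" using alpha_ex by blast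
  then have "S \<subseteq> {0..<n}" unfolding circ_independent_def by auto
  then have "card S \<le> card {0..<n}" by (intro card_mono) auto
  then show ?thesis using S by simp
qed

lemma count_lemma:
  assumes "S \<subseteq> {0..<n}" "n > 0"
  shows "(L div n) * card S \<le> card {x. x < L \<and> x mod n \<in> S}"
proof -
  have fin: "finite S" using assms(1) finite_subset by blast
  let ?f = "\<lambda>(q, s). q * n + s"
  have inj: "inj_on ?f ({..<L div n} \<times> S)"
  proof (rule inj_onI, clarify)
    fix q s q' s'
    assume "s \<in> S" "s' \<in> S" "q * n + s = q' * n + s'"
    moreover have "s < n" "s' < n" using assms \<open>s \<in> S\<close> \<open>s' \<in> S\<close> by auto
    ultimately have "(q * n + s) mod n = (q' * n + s') mod n" by simp
    then have "s = s'" using \<open>s < n\<close> \<open>s' < n\<close> by simp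
    then have "q * n = q' * n" using \<open>q * n + s = q' * n + s'\<close> by simp
    then show "q = q' \<and> s = s'" using assms(2) \<open>s = s'\<close> by simp
  qed
  have sub: "?f ` ({..<L div n} \<times> S) \<subseteq> {x. x < L \<and> x mod n \<in> S}"
  proof clarify
    fix q s assume "q < L div n" "s \<in> S"
    then have sn: "s < n" using assms by auto
    have "q * n + s < (q + 1) * n" using sn by simp
    also have "\<dots> \<le> (L div n) * n" using \<open>q < L div n\<close> by (intro mult_le_mono1) simp
    also have "\<dots> \<le> L" by simp
    finally have "q * n + s < L" .
    moreover have "(q * n + s) mod n = s" using sn by simp
    ultimately show "q * n + s < L \<and> (q * n + s) mod n \<in> S" using \<open>s \<in> S\<close> by simp
  qed
  have "(L div n) * card S = card ({..<L div n} \<times> S)" by (simp add: card_cartesian_product)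
  also have "\<dots> = card (?f ` ({..<L div n} \<times> S))" using card_image[OF inj] by simp
  also have "\<dots> \<le> card {x. x < L \<and> x mod n \<in> S}"
    by (rule card_mono) (auto simp: sub)
  finally show ?thesis .
qed

lemma key:
  assumes fD: "finite D" and D0: "0 \<notin> D" and mD: "\<forall>d\<in>D. d \<le> m"
    and n: "n > 0" and N: "N > m"
  shows "((N - m) div n) * circ_alpha D n \<le> circ_alpha D N"
proof -
  obtain S where S: "circ_independent D n S" "card S = circ_alpha D n" using alpha_ex by blast
  have Ssub: "S \<subseteq> {0..<n}" using S unfolding circ_independent_def by auto
  define T where "T = {x. x < N - m \<and> x mod n \<in> S}"
  have "T \<subseteq> {0..<N}" unfolding T_def by auto
  moreover have "\<not> circ_adj D N x y" if xT: "x \<in> T" and yT: "y \<in> T" for x y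
  proof
    assume adj: "circ_adj D N x y"
    have gen: False if a: "a \<in> T" "b \<in> T" "b \<le> a"
        and ad: "(int a - int b) mod int N = int d mod int N \<or> (int b - int a) mod int N = int d mod int N"
        and dD: "d \<in> D" for a b d
    proof -
      have dm0: "d \<noteq> 0" using dD D0 by (cases d) auto
      have dm1: "d \<le> m" using mD dD by blast
      have d0: "0 < d" "d < N" using dm0 dm1 N by linarith+
      have ab: "a < N - m" using a unfolding T_def by auto
      have dm: "d \<le> m" using mD dD by auto
      have dmod: "int d mod int N = int d" using d0 by simp
      have e1: "(int a - int b) mod int N = int a - int b" using ab a(3) by simp
      show False
      proof (cases "(int a - int b) mod int N = int d mod int N")
        case True
        then have "int a - int b = int d" using e1 dmod by simp
        then have "(int (a mod n) - int (b mod n)) mod int n = int d mod int n"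
          by (simp only: of_nat_mod mod_diff_eq)
        then have "circ_adj D n (a mod n) (b mod n)" unfolding circ_adj_def using dD by blast
        moreover have "a mod n \<in> S" "b mod n \<in> S" using a unfolding T_def by auto
        ultimately show False using S(1) unfolding circ_independent_def by blast
      next
        case False
        then have h: "(int b - int a) mod int N = int d" using ad dmod by simp
        show False
        proof (cases "a = b")
          case True then show ?thesis using h d0 by simp
        next
          case False
          then have ne: "b < a" using a(3) by simp
          have "(int b - int a) mod int N = (int b - int a + int N) mod int N" by simp
          also have "\<dots> = int b - int a + int N"
            using ne ab by (intro mod_pos_pos_trivial) linarith+
          finally have "(int b - int a) mod int N = int N - (int a - int b)" by simp
          then show False using h ab dm N by linarith
        qed
      qed
    qed
    from adj obtain d where dD: "d \<in> D" and
      ad: "(int x - int y) mod int N = int d mod int N \<or> (int y - int x) mod int N = int d mod int N"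
      unfolding circ_adj_def by blast
    show False
    proof (cases "y \<le> x")
      case True show ?thesis using gen[OF xT yT True ad dD] by simp
    next
      case False then show ?thesis using gen[OF yT xT _ _ dD] ad by auto
    qed
  qed
  ultimately have "circ_independent D N T" unfolding circ_independent_def by blast
  then have "card T \<le> circ_alpha D N" by (rule alpha_ge)
  moreover have "((N - m) div n) * card S \<le> card T"
    unfolding T_def by (rule count_lemma[OF Ssub n])
  ultimately show ?thesis using S by simp
qed

lemma ratio_bounds: "0 \<le> real (circ_alpha D n) / real n" "real (circ_alpha D n) / real n \<le> 1"
proof -
  show "0 \<le> real (circ_alpha D n) / real n" by simp
  show "real (circ_alpha D n) / real n \<le> 1"
  proof (cases "n = 0")
    case False
    then show ?thesis using alpha_le[of D n] by (simp add: divide_le_eq_1)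
  qed simp
qed

lemma lower:
  assumes fD: "finite D" and D0: "0 \<notin> D" and mD: "\<forall>d\<in>D. d \<le> m"
    and n: "n > 0" and N: "N > m"
  shows "real (circ_alpha D n) / real n - (real m + real n) / real N
         \<le> real (circ_alpha D N) / real N"
proof -
  define a where "a = real (circ_alpha D n) / real n"
  define k where "k = (N - m) div n"
  have a0: "0 \<le> a" "a \<le> 1" unfolding a_def using ratio_bounds by auto
  have al: "real (circ_alpha D n) = a * real n" unfolding a_def using n by simp
  have e: "(N - m) div n * n + (N - m) mod n = N - m" by (rule div_mult_mod_eq)
  have e2: "(N - m) mod n < n" using n by simp
  have e3: "(k + 1) * n = k * n + n" by simp
  have "N - m < (k + 1) * n" using e e2 e3 unfolding k_def by linarith
  then have "real (N - m) < real ((k + 1) * n)" by (simp only: of_nat_less_iff)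
  moreover have "real (N - m) = real N - real m" using N by (intro of_nat_diff) simp
  moreover have "real ((k + 1) * n) = real k * real n + real n" by (simp add: distrib_right)
  ultimately have kn: "real N - real m - real n < real k * real n" by linarith
  have "k * circ_alpha D n \<le> circ_alpha D N" unfolding k_def by (rule key[OF fD D0 mD n N])
  then have "real (k * circ_alpha D n) \<le> real (circ_alpha D N)" by (simp only: of_nat_le_iff)
  then have "real k * real (circ_alpha D n) \<le> real (circ_alpha D N)" by (simp only: of_nat_mult)
  then have h1: "real k * real n * a \<le> real (circ_alpha D N)" using al by (simp add: mult_ac)
  have "(real N - real m - real n) * a \<le> real k * real n * a"
    using kn a0 by (intro mult_right_mono) auto
  moreover have "real N * a - (real m + real n) \<le> (real N - real m - real n) * a"
  proof -
    have "(real m + real n) * a \<le> real m + real n" using a0 by (intro mult_left_le) auto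
    then show ?thesis by (simp add: algebra_simps)
  qed
  ultimately have "real N * a - (real m + real n) \<le> real (circ_alpha D N)" using h1 by linarith
  moreover have "real N > 0" using N by simp
  ultimately have "(real N * a - (real m + real n)) / real N \<le> real (circ_alpha D N) / real N"
    by (intro divide_right_mono) auto
  moreover have "(real N * a - (real m + real n)) / real N = a - (real m + real n) / real N"
    using \<open>real N > 0\<close> by (simp add: field_simps)
  ultimately show ?thesis unfolding a_def[symmetric] by simp
qed

theorem theorem1:
  fixes D :: "nat set"
  assumes "finite D" and "0 \<notin> D"
  shows "(\<lambda>n. real (circ_alpha D n) / real n) \<longlonglongrightarrow>
           (SUP n\<in>{1..}. real (circ_alpha D n) / real n)"
proof -
  define f where "f = (\<lambda>n. real (circ_alpha D n) / real n)"
  define s where "s = (SUP n\<in>{1..}. f n)"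
  define m where "m = Max (insert 0 D)"
  have mD: "\<forall>d\<in>D. d \<le> m" unfolding m_def using assms(1) by auto
  have bdd: "bdd_above (f ` {1..})" unfolding f_def using ratio_bounds
    by (intro bdd_aboveI[of _ 1]) auto
  have ne: "{1::nat..} \<noteq> {}" by auto
  have up: "f N \<le> s" if "N \<ge> 1" for N
    unfolding s_def using that bdd by (intro cSUP_upper) auto
  show ?thesis unfolding f_def[symmetric] s_def[symmetric]
  proof (rule LIMSEQ_I)
    fix r :: real assume r: "0 < r"
    have "s - r / 2 < s" using r by simp
    then have "s - r / 2 < (SUP n\<in>{1..}. f n)" unfolding s_def .
    then have "\<exists>x\<in>{1..}. s - r / 2 < f x" by (simp only: less_cSUP_iff[OF ne bdd])
    then obtain n0 where n0: "n0 \<in> {1..}" "s - r / 2 < f n0" by blast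
    obtain M :: nat where M: "2 * (real m + real n0) / r < real M"
      using reals_Archimedean2 by blast
    show "\<exists>no. \<forall>N\<ge>no. norm (f N - s) < r"
    proof (intro exI allI impI)
      fix N assume N: "N \<ge> max M (m + 1)"
      then have Nm: "N > m" "N \<ge> 1" by auto
      have Npos: "real N > 0" using Nm by simp
      have "2 * (real m + real n0) / r < real N" 
      proof -
        have "real M \<le> real N" using N by simp
        then show ?thesis using M by linarith
      qed
      then have "2 * (real m + real n0) < r * real N" using r by (simp add: field_simps)
      then have q: "(real m + real n0) / real N < r / 2" using Npos by (simp add: field_simps)
      have "f n0 - (real m + real n0) / real N \<le> f N"
        unfolding f_def using lower[OF assms mD _ Nm(1), of n0] n0 by simp
      then have "s - r < f N" using n0 q by linarith
      moreover have "f N \<le> s" using up Nm by simp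
      ultimately show "norm (f N - s) < r" by simp
    qed
  qed
qed

end
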